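(* Let $\alpha\in(0,1)$ and let $0=t_0<t_1<\cdots$ be arbitrary time levels with $\tau_k=t_k-t_{k-1}$ and $r_k=\tau_k/\tau_{k-1}$ ($k\ge2$). Then for $n\ge2$: (i) $\eta^{(n)}_{n-k}<\eta^{(n-1)}_{n-k-1}$ for $1\le k\le n-1$; (ii) $\eta^{(n)}_{n-k-1}>r_{k+1}\eta^{(n)}_{n-k}$ for $1\le k\le n-1$, and $$\eta^{(n)}_{n-k-1}-r_{k+1}\eta^{(n)}_{n-k}<\eta^{(n-1)}_{n-k-2}-r_{k+1}\eta^{(n-1)}_{n-k-1}\quad\text{for }1\le k\le n-2.$$
   Context: $\omega_{1-\alpha}(t):=t^{-\alpha}/\Gamma(1-\alpha)$; $\eta^{(n)}_{n-k}:=\frac{2}{\tau_k}\int_{t_{k-1}}^{t_k}\frac{s-t_{k-1/2}}{\tau_k}\omega_{1-\alpha}(t_n-s)\,ds$ for $1\le k\le n$, where $t_{k-1/2}=(t_k+t_{k-1})/2$. *)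

theory Defs
  imports "HOL-Analysis.Analysis"
begin

definition omega :: "real \<Rightarrow> real \<Rightarrow> real" where
  "omega \<alpha> x = x powr (-\<alpha>) / Gamma (1 - \<alpha>)"

definition tau :: "(nat \<Rightarrow> real) \<Rightarrow> nat \<Rightarrow> real" where
  "tau t k = t k - t (k - 1)"

definition ratio :: "(nat \<Rightarrow> real) \<Rightarrow> nat \<Rightarrow> real" where
  "ratio t k = tau t k / tau t (k - 1)"

(* eta t alpha n k  is  eta^{(n)}_{n-k}  of the paper (1 <= k <= n) *)
definition eta :: "(nat \<Rightarrow> real) \<Rightarrow> real \<Rightarrow> nat \<Rightarrow> nat \<Rightarrow> real" where
  "eta t \<alpha> n k = 2 / tau t k *
     integral {t (k - 1) .. t k}
       (\<lambda>s. (s - (t k + t (k - 1)) / 2) / tau t k * omega \<alpha> (t n - s))"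

end

theory Submission
  imports Defs
begin

definition phi :: "real \<Rightarrow> real \<Rightarrow> real" where "phi a x = x powr (-a)"
definition PP :: "real \<Rightarrow> real \<Rightarrow> real" where "PP a x = x powr (1-a) / (1-a)"
definition QQ :: "real \<Rightarrow> real \<Rightarrow> real" where "QQ a x = x powr (2-a) / (2-a)"
definition psi0 :: "real \<Rightarrow> real \<Rightarrow> real" where "psi0 a x = a * x powr (-a-1)"
definition chi :: "real \<Rightarrow> real \<Rightarrow> real" where "chi a x = a * (a+1) * x powr (-a-2)"
definition KK :: "real \<Rightarrow> real \<Rightarrow> real \<Rightarrow> real" where
  "KK a x y = (x+y)/2 * (PP a y - PP a x) - (QQ a y - QQ a x)"
definition Tr :: "real \<Rightarrow> real \<Rightarrow> real \<Rightarrow> real" where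
  "Tr a x y = PP a y - PP a x - (y-x) * (phi a x + phi a y) / 2"

context fixes \<alpha> :: real assumes a0: "0 < \<alpha>" and a1: "\<alpha> < 1"
begin

lemma d_phi[derivative_intros]:
  assumes "(g has_real_derivative g') (at x within S)" "g x > 0"
  shows "((\<lambda>x. phi \<alpha> (g x)) has_real_derivative (- psi0 \<alpha> (g x) * g')) (at x within S)"
proof -
  have "((\<lambda>z. z powr (-\<alpha>)) has_real_derivative (-\<alpha>) * (g x) powr (-\<alpha> - 1)) (at (g x))"
    using has_real_derivative_powr[OF assms(2), of "-\<alpha>"] by simp
  from DERIV_chain2[OF this assms(1)] show ?thesis
    by (simp add: phi_def psi0_def)
qed

lemma d_psi0[derivative_intros]:
  assumes "(g has_real_derivative g') (at x within S)" "g x > 0"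
  shows "((\<lambda>x. psi0 \<alpha> (g x)) has_real_derivative (- chi \<alpha> (g x) * g')) (at x within S)"
proof -
  have "((\<lambda>z. z powr (-\<alpha>-1)) has_real_derivative (-\<alpha>-1) * (g x) powr (-\<alpha> - 1 - 1)) (at (g x))"
    using has_real_derivative_powr[OF assms(2), of "-\<alpha>-1"] by simp
  from DERIV_chain2[OF this assms(1)] have
   "((\<lambda>x. (g x) powr (-\<alpha>-1)) has_real_derivative (-\<alpha>-1) * (g x) powr (-\<alpha> - 2) * g') (at x within S)"
    by (simp add: algebra_simps)
  then have "((\<lambda>x. \<alpha> * (g x) powr (-\<alpha>-1)) has_real_derivative \<alpha> * ((-\<alpha>-1) * (g x) powr (-\<alpha> - 2) * g')) (at x within S)"
    by (rule DERIV_cmult)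
  then show ?thesis
    unfolding psi0_def chi_def by (rule DERIV_cong) (simp add: algebra_simps)
qed

lemma d_PP[derivative_intros]:
  assumes "(g has_real_derivative g') (at x within S)" "g x > 0"
  shows "((\<lambda>x. PP \<alpha> (g x)) has_real_derivative (phi \<alpha> (g x) * g')) (at x within S)"
proof -
  have "((\<lambda>z. z powr (1-\<alpha>)) has_real_derivative (1-\<alpha>) * (g x) powr (1-\<alpha> - 1)) (at (g x))"
    using has_real_derivative_powr[OF assms(2), of "1-\<alpha>"] by simp
  from DERIV_chain2[OF this assms(1)] have
   "((\<lambda>x. (g x) powr (1-\<alpha>)) has_real_derivative (1-\<alpha>) * (g x) powr (-\<alpha>) * g') (at x within S)"
    by simp
  then have "((\<lambda>x. (g x) powr (1-\<alpha>) / (1-\<alpha>)) has_real_derivative (1-\<alpha>) * (g x) powr (-\<alpha>) * g' / (1-\<alpha>)) (at x within S)"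
    by (rule DERIV_cdivide)
  then show ?thesis
    using a1 by (simp add: PP_def phi_def)
qed

lemma d_QQ[derivative_intros]:
  assumes "(g has_real_derivative g') (at x within S)" "g x > 0"
  shows "((\<lambda>x. QQ \<alpha> (g x)) has_real_derivative (g x * phi \<alpha> (g x) * g')) (at x within S)"
proof -
  have "((\<lambda>z. z powr (2-\<alpha>)) has_real_derivative (2-\<alpha>) * (g x) powr (2-\<alpha> - 1)) (at (g x))"
    using has_real_derivative_powr[OF assms(2), of "2-\<alpha>"] by simp
  from DERIV_chain2[OF this assms(1)] have
   "((\<lambda>x. (g x) powr (2-\<alpha>)) has_real_derivative (2-\<alpha>) * (g x) powr (1-\<alpha>) * g') (at x within S)"
    by (simp add: algebra_simps)
  then have "((\<lambda>x. (g x) powr (2-\<alpha>) / (2-\<alpha>)) has_real_derivative (2-\<alpha>) * (g x) powr (1-\<alpha>) * g' / (2-\<alpha>)) (at x within S)"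
    by (rule DERIV_cdivide)
  moreover have "(g x) powr (1-\<alpha>) = g x * (g x) powr (-\<alpha>)"
    using assms(2) powr_add[of "g x" 1 "-\<alpha>"] by simp
  ultimately show ?thesis
    using a1 by (simp add: QQ_def phi_def mult.assoc)
qed

lemma cont_PP:
  assumes "continuous_on S g" "\<forall>x\<in>S. g x \<ge> 0"
  shows "continuous_on S (\<lambda>x. PP \<alpha> (g x))"
  unfolding PP_def using assms a1
  by (intro continuous_intros continuous_on_powr') auto

lemma cont_QQ:
  assumes "continuous_on S g" "\<forall>x\<in>S. g x \<ge> 0"
  shows "continuous_on S (\<lambda>x. QQ \<alpha> (g x))"
  unfolding QQ_def using assms a1
  by (intro continuous_intros continuous_on_powr') auto

lemma psi0_less: "0 < x \<Longrightarrow> x < y \<Longrightarrow> psi0 \<alpha> y < psi0 \<alpha> x"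
  unfolding psi0_def using a0 by (simp add: powr_less_mono2_neg)

lemma chi_less: "0 < x \<Longrightarrow> x < y \<Longrightarrow> chi \<alpha> y < chi \<alpha> x"
  unfolding chi_def using a0 by (simp add: powr_less_mono2_neg)

lemma deriv_cont:
  assumes "\<And>x. x \<in> {a..b} \<Longrightarrow> (f has_real_derivative f' x) (at x)"
  shows "continuous_on {a..b} f"
  using assms by (meson DERIV_isCont continuous_at_imp_continuous_on)


lemma dec_by_deriv':
  assumes "a < b" "continuous_on {a..b} f"
    "\<And>z. a < z \<Longrightarrow> z < b \<Longrightarrow> (f has_real_derivative f' z) (at z)"
    "\<And>z. a < z \<Longrightarrow> z < b \<Longrightarrow> f' z < 0"
  shows "f b < f a"
proof (rule DERIV_neg_imp_decreasing_open[OF assms(1) _ assms(2)])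
  fix x assume "a < x" "x < b"
  then show "\<exists>y. (f has_real_derivative y) (at x) \<and> y < 0"
    using assms(3,4) by blast
qed

lemma inc_by_deriv':
  assumes "a < b" "continuous_on {a..b} f"
    "\<And>z. a < z \<Longrightarrow> z < b \<Longrightarrow> (f has_real_derivative f' z) (at z)"
    "\<And>z. a < z \<Longrightarrow> z < b \<Longrightarrow> f' z > 0"
  shows "f a < f b"
proof (rule DERIV_pos_imp_increasing_open[OF assms(1) _ assms(2)])
  fix x assume "a < x" "x < b"
  then show "\<exists>y. (f has_real_derivative y) (at x) \<and> y > 0"
    using assms(3,4) by blast
qed

lemma dec_by_deriv:
  assumes "a < b"
    "\<And>z. a \<le> z \<Longrightarrow> z \<le> b \<Longrightarrow> (f has_real_derivative f' z) (at z)"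
    "\<And>z. a < z \<Longrightarrow> z < b \<Longrightarrow> f' z < 0"
  shows "f b < f a"
proof (rule dec_by_deriv'[of a b f f'])
  show "continuous_on {a..b} f" by (rule deriv_cont[of a b f f']) (use assms(2) in auto)
qed (use assms in auto)

lemma inc_by_deriv:
  assumes "a < b"
    "\<And>z. a \<le> z \<Longrightarrow> z \<le> b \<Longrightarrow> (f has_real_derivative f' z) (at z)"
    "\<And>z. a < z \<Longrightarrow> z < b \<Longrightarrow> f' z > 0"
  shows "f a < f b"
proof (rule inc_by_deriv'[of a b f f'])
  show "continuous_on {a..b} f" by (rule deriv_cont[of a b f f']) (use assms(2) in auto)
qed (use assms in auto)

lemma L1:
  assumes "0 < x" "x < y"
  shows "psi0 \<alpha> y * (y - x) < phi \<alpha> x - phi \<alpha> y"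
proof -
  have "(\<lambda>z. phi \<alpha> z - phi \<alpha> y - psi0 \<alpha> y * (y - z)) y < (\<lambda>z. phi \<alpha> z - phi \<alpha> y - psi0 \<alpha> y * (y - z)) x"
  proof (rule dec_by_deriv[where f' = "\<lambda>z. - psi0 \<alpha> z + psi0 \<alpha> y" and f="\<lambda>z. phi \<alpha> z - phi \<alpha> y - psi0 \<alpha> y * (y - z)" and a=x and b=y])
    fix z assume "x \<le> z" "z \<le> y"
    then have "z > 0" using assms by auto
    show "((\<lambda>z. phi \<alpha> z - phi \<alpha> y - psi0 \<alpha> y * (y - z)) has_real_derivative - psi0 \<alpha> z + psi0 \<alpha> y) (at z)"
      using \<open>z > 0\<close> assms by (auto intro!: derivative_eq_intros)
  next
    fix z assume "x < z" "z < y"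
    then show "- psi0 \<alpha> z + psi0 \<alpha> y < 0" using psi0_less[of z y] assms by auto
  qed (use assms in auto)
  then show ?thesis by simp
qed


lemma cont_KK:
  assumes "continuous_on S g1" "continuous_on S g2" "\<forall>x\<in>S. g1 x \<ge> 0" "\<forall>x\<in>S. g2 x \<ge> 0"
  shows "continuous_on S (\<lambda>x. KK \<alpha> (g1 x) (g2 x))"
  unfolding KK_def using assms
  by (intro continuous_intros cont_PP cont_QQ) auto

lemma L2:
  assumes "0 < x" "x < y"
  shows "Tr \<alpha> x y < 0"
proof -
  have "Tr \<alpha> x y < Tr \<alpha> x x"
  proof (rule dec_by_deriv[of x y "\<lambda>w. Tr \<alpha> x w" "\<lambda>w. (phi \<alpha> w - phi \<alpha> x + (w-x)*psi0 \<alpha> w)/2"])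
    fix z assume "x \<le> z" "z \<le> y"
    then have "z > 0" using assms by auto
    then show "((\<lambda>w. Tr \<alpha> x w) has_real_derivative (phi \<alpha> z - phi \<alpha> x + (z-x)*psi0 \<alpha> z)/2) (at z)"
      unfolding Tr_def by (auto intro!: derivative_eq_intros simp: field_simps)
  next
    fix z assume "x < z" "z < y"
    then show "(phi \<alpha> z - phi \<alpha> x + (z-x)*psi0 \<alpha> z)/2 < 0" using L1[of x z] assms by (simp add: mult.commute)
  qed (use assms in auto)
  then show ?thesis by (simp add: Tr_def)
qed

lemma dKK_shift:
  assumes "x + e > 0" "x \<le> y"
  shows "((\<lambda>e. KK \<alpha> (x+e) (y+e)) has_real_derivative Tr \<alpha> (x+e) (y+e)) (at e)"
  unfolding KK_def Tr_def using assms
  by (auto intro!: derivative_eq_intros simp: field_simps)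

lemma L3:
  assumes "0 \<le> a" "a < b" "0 < d"
  shows "KK \<alpha> (a+d) (b+d) < KK \<alpha> a b"
proof -
  have "KK \<alpha> (a+d) (b+d) < KK \<alpha> (a+0) (b+0)"
  proof (rule dec_by_deriv'[of 0 d "\<lambda>e. KK \<alpha> (a+e) (b+e)" "\<lambda>e. Tr \<alpha> (a+e) (b+e)"])
    show "continuous_on {0..d} (\<lambda>e. KK \<alpha> (a+e) (b+e))"
      using assms by (intro cont_KK continuous_intros) auto
  next
    fix z assume "0 < z" "z < d"
    then show "((\<lambda>e. KK \<alpha> (a+e) (b+e)) has_real_derivative Tr \<alpha> (a+z) (b+z)) (at z)"
      using assms by (intro dKK_shift) auto
    show "Tr \<alpha> (a+z) (b+z) < 0" using L2[of "a+z" "b+z"] assms \<open>0<z\<close> by auto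
  qed (use assms in auto)
  then show ?thesis by simp
qed

lemma L4:
  assumes "0 < a" "a < b"
  shows "12 * KK \<alpha> a b < (b-a)^3 * psi0 \<alpha> a"
proof -
  define G1 where "G1 w = (w-a)^2 * psi0 \<alpha> a/4 - (PP \<alpha> w - PP \<alpha> a)/2 + (w-a) * phi \<alpha> w/2" for w
  have G1pos: "G1 w > 0" if "a < w" for w
  proof -
    have "G1 a < G1 w"
    proof (rule inc_by_deriv[of a w G1 "\<lambda>z. (z-a)*(psi0 \<alpha> a - psi0 \<alpha> z)/2"])
      fix z assume "a \<le> z" "z \<le> w"
      then have "z > 0" using assms by auto
      then show "(G1 has_real_derivative (z-a)*(psi0 \<alpha> a - psi0 \<alpha> z)/2) (at z)"
        unfolding G1_def by (auto intro!: derivative_eq_intros simp: field_simps)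
    next
      fix z assume "a < z" "z < w"
      then show "(z-a)*(psi0 \<alpha> a - psi0 \<alpha> z)/2 > 0" using psi0_less[of a z] assms by auto
    qed (use that in auto)
    then show ?thesis by (simp add: G1_def)
  qed
  have "(\<lambda>w. (w-a)^3 * psi0 \<alpha> a/12 - KK \<alpha> a w) a < (\<lambda>w. (w-a)^3 * psi0 \<alpha> a/12 - KK \<alpha> a w) b"
  proof (rule inc_by_deriv[of a b "\<lambda>w. (w-a)^3 * psi0 \<alpha> a/12 - KK \<alpha> a w" G1])
    fix z assume "a \<le> z" "z \<le> b"
    then have "z > 0" using assms by auto
    then show "((\<lambda>w. (w-a)^3 * psi0 \<alpha> a/12 - KK \<alpha> a w) has_real_derivative G1 z) (at z)"
      unfolding G1_def KK_def by (auto intro!: derivative_eq_intros simp: field_simps power2_eq_square)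
  qed (use assms G1pos in auto)
  then show ?thesis by (simp add: KK_def)
qed

lemma L5:
  assumes "0 \<le> c" "c < a"
  shows "(a-c)^3 * psi0 \<alpha> a < 12 * KK \<alpha> c a"
proof -
  define H1 where "H1 x = (PP \<alpha> a - PP \<alpha> x)/2 - (a-x) * phi \<alpha> x/2 + (a-x)^2 * psi0 \<alpha> a/4" for x
  have H1neg: "H1 x < 0" if "0 < x" "x < a" for x
  proof -
    have "H1 x < H1 a"
    proof (rule inc_by_deriv[of x a H1 "\<lambda>z. (a-z)*(psi0 \<alpha> z - psi0 \<alpha> a)/2"])
      fix z assume "x \<le> z" "z \<le> a"
      then have "z > 0" using that by auto
      then show "(H1 has_real_derivative (a-z)*(psi0 \<alpha> z - psi0 \<alpha> a)/2) (at z)"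
        unfolding H1_def by (auto intro!: derivative_eq_intros simp: field_simps power2_eq_square)
    next
      fix z assume "x < z" "z < a"
      then show "(a-z)*(psi0 \<alpha> z - psi0 \<alpha> a)/2 > 0" using psi0_less[of z a] that by auto
    qed (use that in auto)
    then show ?thesis by (simp add: H1_def)
  qed
  have "(\<lambda>x. KK \<alpha> x a - (a-x)^3 * psi0 \<alpha> a/12) a < (\<lambda>x. KK \<alpha> x a - (a-x)^3 * psi0 \<alpha> a/12) c"
  proof (rule dec_by_deriv'[of c a "\<lambda>x. KK \<alpha> x a - (a-x)^3 * psi0 \<alpha> a/12" H1])
    show "continuous_on {c..a} (\<lambda>x. KK \<alpha> x a - (a-x)^3 * psi0 \<alpha> a/12)"
      using assms by (intro cont_KK continuous_intros) auto
  next
    fix z assume "c < z" "z < a"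
    then have "z > 0" using assms by auto
    then show "((\<lambda>x. KK \<alpha> x a - (a-x)^3 * psi0 \<alpha> a/12) has_real_derivative H1 z) (at z)"
      unfolding H1_def KK_def by (auto intro!: derivative_eq_intros simp: field_simps power2_eq_square)
    show "H1 z < 0" using H1neg \<open>z>0\<close> \<open>z<a\<close> by auto
  qed (use assms in auto)
  then show ?thesis by (simp add: KK_def)
qed

lemma L6:
  assumes "0 < y" "y < z"
  shows "0 < Tr \<alpha> y z + (z-y)^3 * chi \<alpha> y / 12"
proof -
  define G where "G w = (phi \<alpha> w - phi \<alpha> y)/2 + (w-y) * psi0 \<alpha> w/2 + (w-y)^2 * chi \<alpha> y/4" for w
  have Gpos: "G w > 0" if "y < w" for w
  proof -
    have "G y < G w"
    proof (rule inc_by_deriv[of y w G "\<lambda>v. (v-y)*(chi \<alpha> y - chi \<alpha> v)/2"])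
      fix v assume "y \<le> v" "v \<le> w"
      then have "v > 0" using assms by auto
      then show "(G has_real_derivative (v-y)*(chi \<alpha> y - chi \<alpha> v)/2) (at v)"
        unfolding G_def by (auto intro!: derivative_eq_intros simp: field_simps power2_eq_square)
    next
      fix v assume "y < v" "v < w"
      then show "(v-y)*(chi \<alpha> y - chi \<alpha> v)/2 > 0" using chi_less[of y v] assms by auto
    qed (use that in auto)
    then show ?thesis by (simp add: G_def)
  qed
  have "(\<lambda>w. Tr \<alpha> y w + (w-y)^3 * chi \<alpha> y / 12) y < (\<lambda>w. Tr \<alpha> y w + (w-y)^3 * chi \<alpha> y / 12) z"
  proof (rule inc_by_deriv[of y z "\<lambda>w. Tr \<alpha> y w + (w-y)^3 * chi \<alpha> y / 12" G])
    fix v assume "y \<le> v" "v \<le> z"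
    then have "v > 0" using assms by auto
    then show "((\<lambda>w. Tr \<alpha> y w + (w-y)^3 * chi \<alpha> y / 12) has_real_derivative G v) (at v)"
      unfolding G_def Tr_def by (auto intro!: derivative_eq_intros simp: field_simps power2_eq_square)
  qed (use assms Gpos in auto)
  then show ?thesis by (simp add: Tr_def)
qed

lemma L7:
  assumes "0 < x" "x < y"
  shows "Tr \<alpha> x y + (y-x)^3 * chi \<alpha> y / 12 < 0"
proof -
  define H where "H v = (phi \<alpha> y - phi \<alpha> v)/2 + (y-v) * psi0 \<alpha> v/2 - (y-v)^2 * chi \<alpha> y/4" for v
  have Hpos: "H v > 0" if "0 < v" "v < y" for v
  proof -
    have "H y < H v"
    proof (rule dec_by_deriv[of v y H "\<lambda>u. (y-u)*(chi \<alpha> y - chi \<alpha> u)/2"])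
      fix u assume "v \<le> u" "u \<le> y"
      then have "u > 0" using that by auto
      then show "(H has_real_derivative (y-u)*(chi \<alpha> y - chi \<alpha> u)/2) (at u)"
        unfolding H_def by (auto intro!: derivative_eq_intros simp: field_simps power2_eq_square)
    next
      fix u assume "v < u" "u < y"
      then have "(y-u)*(chi \<alpha> y - chi \<alpha> u) < 0" using chi_less[of u y] that by (intro mult_pos_neg) auto
      then show "(y-u)*(chi \<alpha> y - chi \<alpha> u)/2 < 0" by simp
    qed (use that in auto)
    then show ?thesis by (simp add: H_def)
  qed
  have "(\<lambda>v. Tr \<alpha> v y + (y-v)^3 * chi \<alpha> y / 12) x < (\<lambda>v. Tr \<alpha> v y + (y-v)^3 * chi \<alpha> y / 12) y"
  proof (rule inc_by_deriv[of x y "\<lambda>v. Tr \<alpha> v y + (y-v)^3 * chi \<alpha> y / 12" H])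
    fix v assume "x \<le> v" "v \<le> y"
    then have "v > 0" using assms by auto
    then show "((\<lambda>v. Tr \<alpha> v y + (y-v)^3 * chi \<alpha> y / 12) has_real_derivative H v) (at v)"
      unfolding H_def Tr_def by (auto intro!: derivative_eq_intros simp: field_simps power2_eq_square)
  next
    fix v assume "x < v" "v < y"
    then show "H v > 0" using Hpos assms by auto
  qed (use assms in auto)
  then show ?thesis by (simp add: Tr_def)
qed


lemma L8:
  assumes "0 \<le> c" "c < a" "a < b" "0 < d"
  shows "KK \<alpha> (c+d) (a+d) / (a-c)^3 - KK \<alpha> (a+d) (b+d) / (b-a)^3
       < KK \<alpha> c a / (a-c)^3 - KK \<alpha> a b / (b-a)^3"
proof -
  let ?D = "\<lambda>e. KK \<alpha> (c+e) (a+e) / (a-c)^3 - KK \<alpha> (a+e) (b+e) / (b-a)^3"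
  have "?D d < ?D 0"
  proof (rule dec_by_deriv'[of 0 d ?D "\<lambda>e. Tr \<alpha> (c+e) (a+e) / (a-c)^3 - Tr \<alpha> (a+e) (b+e) / (b-a)^3"])
    show "continuous_on {0..d} ?D"
      using assms by (intro cont_KK continuous_intros continuous_on_divide) auto
  next
    fix z assume z: "0 < z" "z < d"
    show "(?D has_real_derivative Tr \<alpha> (c+z) (a+z) / (a-c)^3 - Tr \<alpha> (a+z) (b+z) / (b-a)^3) (at z)"
      using assms z by (intro DERIV_diff DERIV_cdivide dKK_shift) auto
    have "Tr \<alpha> (c+z) (a+z) + (a-c)^3 * chi \<alpha> (a+z) / 12 < 0"
      using L7[of "c+z" "a+z"] assms z by auto
    then have "Tr \<alpha> (c+z) (a+z) < - ((a-c)^3 * chi \<alpha> (a+z) / 12)" by linarith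
    then have "Tr \<alpha> (c+z) (a+z) / (a-c)^3 < - ((a-c)^3 * chi \<alpha> (a+z) / 12) / (a-c)^3"
      using assms by (intro divide_strict_right_mono) auto
    also have "\<dots> = - chi \<alpha> (a+z) / 12" using assms by simp
    finally have 1: "Tr \<alpha> (c+z) (a+z) / (a-c)^3 < - chi \<alpha> (a+z) / 12" .
    have "0 < Tr \<alpha> (a+z) (b+z) + (b-a)^3 * chi \<alpha> (a+z) / 12"
      using L6[of "a+z" "b+z"] assms z by auto
    then have "- ((b-a)^3 * chi \<alpha> (a+z) / 12) < Tr \<alpha> (a+z) (b+z)" by linarith
    then have "- ((b-a)^3 * chi \<alpha> (a+z) / 12) / (b-a)^3 < Tr \<alpha> (a+z) (b+z) / (b-a)^3"
      using assms by (intro divide_strict_right_mono) auto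
    also have "- ((b-a)^3 * chi \<alpha> (a+z) / 12) / (b-a)^3 = - chi \<alpha> (a+z) / 12" using assms by simp
    finally have 2: "- chi \<alpha> (a+z) / 12 < Tr \<alpha> (a+z) (b+z) / (b-a)^3" .
    show "Tr \<alpha> (c+z) (a+z) / (a-c)^3 - Tr \<alpha> (a+z) (b+z) / (b-a)^3 < 0"
      using 1 2 by linarith
  qed (use assms in auto)
  then show ?thesis by simp
qed

end
context fixes \<alpha> :: real assumes a0: "0 < \<alpha>" and a1: "\<alpha> < 1"
begin
lemma eta_closed:
  assumes "strict_mono t" "1 \<le> j" "j \<le> n"
  shows "eta t \<alpha> n j = 2 / (Gamma (1-\<alpha>) * (tau t j)^2) * KK \<alpha> (t n - t j) (t n - t (j-1))"
proof -
  define T where "T = t n"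
  define lo where "lo = t (j-1)"
  define hi where "hi = t j"
  define m where "m = (hi + lo)/2"
  define \<tau> where "\<tau> = hi - lo"
  define \<Gamma> where "\<Gamma> = Gamma (1-\<alpha>)"
  have G: "\<Gamma> > 0" unfolding \<Gamma>_def using a1 by (simp add: Gamma_real_pos)
  have lohi: "lo < hi" unfolding lo_def hi_def using assms by (auto intro: strict_monoD[OF assms(1)])
  have hiT: "hi \<le> T" unfolding T_def hi_def using assms by (simp add: strict_mono_less_eq)
  have tau: "tau t j = \<tau>" unfolding tau_def \<tau>_def hi_def lo_def by simp
  define F where "F s = (-(T - m) * PP \<alpha> (T - s) + QQ \<alpha> (T - s)) / (\<tau> * \<Gamma>)" for s
  have int: "((\<lambda>s. (s - (hi + lo)/2) / \<tau> * omega \<alpha> (T - s)) has_integral (F hi - F lo)) {lo..hi}"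
  proof (rule fundamental_theorem_of_calculus_interior)
    show "lo \<le> hi" using lohi by simp
    show "continuous_on {lo..hi} F"
      unfolding F_def using hiT G lohi unfolding \<tau>_def by (intro continuous_intros cont_PP[OF a0 a1] cont_QQ[OF a0 a1]) auto
  next
    fix s assume s: "s \<in> {lo<..<hi}"
    then have "T - s > 0" using hiT by auto
    have "(F has_real_derivative (s - (hi + lo)/2) / \<tau> * omega \<alpha> (T - s)) (at s)"
    proof -
      have "(F has_real_derivative ((T-m) * phi \<alpha> (T-s) - (T-s) * phi \<alpha> (T-s)) / (\<tau> * \<Gamma>)) (at s)"
        unfolding F_def using \<open>T - s > 0\<close>
        apply (intro DERIV_cdivide)
        using a0 a1 by (auto intro!: derivative_eq_intros simp: algebra_simps)
      moreover have "((T-m) * phi \<alpha> (T-s) - (T-s) * phi \<alpha> (T-s)) / (\<tau> * \<Gamma>) = (s - (hi + lo)/2) / \<tau> * omega \<alpha> (T - s)"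
        unfolding m_def omega_def phi_def \<Gamma>_def by (simp add: algebra_simps)
      ultimately show ?thesis by simp
    qed
    then show "(F has_vector_derivative (s - (hi + lo)/2) / \<tau> * omega \<alpha> (T - s)) (at s)"
      by (simp add: has_real_derivative_iff_has_vector_derivative)
  qed
  have "eta t \<alpha> n j = 2 / \<tau> * (F hi - F lo)"
    unfolding eta_def using integral_unique[OF int] tau
    by (simp add: T_def hi_def lo_def)
  also have "\<dots> = 2 / (\<Gamma> * \<tau>^2) * KK \<alpha> (T - hi) (T - lo)"
  proof -
    have e1: "F hi - F lo = KK \<alpha> (T - hi) (T - lo) / (\<tau> * \<Gamma>)"
    proof -
      have num: "(-(T - m) * PP \<alpha> (T - hi) + QQ \<alpha> (T - hi)) - (-(T - m) * PP \<alpha> (T - lo) + QQ \<alpha> (T - lo))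
          = KK \<alpha> (T - hi) (T - lo)"
        unfolding KK_def m_def by (simp add: field_simps)
      show ?thesis unfolding F_def num[symmetric] by (simp add: diff_divide_distrib)
    qed
    show ?thesis unfolding e1 using G lohi unfolding \<tau>_def
      by (simp add: power2_eq_square)
  qed
  finally show ?thesis unfolding tau T_def hi_def lo_def \<Gamma>_def .
qed

end

lemma alg_form:
  fixes G u v K1 K2 :: real
  assumes "G > 0" "u > 0" "v > 0"
  shows "2 / (G * u^2) * K1 - u / v * (2 / (G * v^2) * K2) = 2 * u / G * (K1 / u^3 - K2 / v^3)"
  using assms by (simp add: field_simps power2_eq_square power3_eq_cube)

lemma lt_div3:
  fixes u p K :: real
  assumes "u > 0" "u^3 * p < 12 * K"
  shows "p/12 < K/u^3"
  using assms by (simp add: field_simps)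

lemma div3_lt:
  fixes u p K :: real
  assumes "u > 0" "12 * K < u^3 * p"
  shows "K/u^3 < p/12"
  using assms by (simp add: field_simps)

theorem lemma4p2:
  fixes t :: "nat \<Rightarrow> real" and \<alpha> :: real and n :: nat
  assumes "0 < \<alpha>" "\<alpha> < 1"
    and "t 0 = 0" "strict_mono t"
    and "2 \<le> n"
  shows "(\<forall>k. 1 \<le> k \<and> k \<le> n - 1 \<longrightarrow> eta t \<alpha> n k < eta t \<alpha> (n - 1) k)
    \<and> (\<forall>k. 1 \<le> k \<and> k \<le> n - 1 \<longrightarrow> eta t \<alpha> n (k + 1) > ratio t (k + 1) * eta t \<alpha> n k)
    \<and> (\<forall>k. 1 \<le> k \<and> k \<le> n - 2 \<longrightarrow>
         eta t \<alpha> n (k + 1) - ratio t (k + 1) * eta t \<alpha> n k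
           < eta t \<alpha> (n - 1) (k + 1) - ratio t (k + 1) * eta t \<alpha> (n - 1) k)"
proof -
  note sm = assms(4)
  have lt: "t i < t j" if "i < j" for i j using strict_monoD[OF sm that] .
  have le: "t i \<le> t j" if "i \<le> j" for i j using that sm by (simp add: strict_mono_less_eq)
  define \<Gamma> where "\<Gamma> = Gamma (1-\<alpha>)"
  have G: "\<Gamma> > 0" unfolding \<Gamma>_def using assms(2) by simp
  have taupos: "tau t j > 0" if "1 \<le> j" for j unfolding tau_def using lt[of "j-1" j] that by simp
  have ec: "eta t \<alpha> m j = 2 / (\<Gamma> * (tau t j)^2) * KK \<alpha> (t m - t j) (t m - t (j-1))"
    if "1 \<le> j" "j \<le> m" for m j
    unfolding \<Gamma>_def using eta_closed[OF assms(1,2) sm that] .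
  have d: "t n - t (n-1) > 0" using lt[of "n-1" n] assms(5) by simp
  have P1: "eta t \<alpha> n k < eta t \<alpha> (n - 1) k" if k: "1 \<le> k" "k \<le> n - 1" for k
  proof -
    have "KK \<alpha> ((t (n-1) - t k) + (t n - t (n-1))) ((t (n-1) - t (k-1)) + (t n - t (n-1)))
        < KK \<alpha> (t (n-1) - t k) (t (n-1) - t (k-1))"
      using L3[OF assms(1,2), of "t (n-1) - t k" "t (n-1) - t (k-1)" "t n - t (n-1)"]
        le[of k "n-1"] lt[of "k-1" k] k d by simp
    then have "KK \<alpha> (t n - t k) (t n - t (k-1)) < KK \<alpha> (t (n-1) - t k) (t (n-1) - t (k-1))"
      by simp
    then have "2 / (\<Gamma> * (tau t k)^2) * KK \<alpha> (t n - t k) (t n - t (k-1))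
      < 2 / (\<Gamma> * (tau t k)^2) * KK \<alpha> (t (n-1) - t k) (t (n-1) - t (k-1))"
      using G taupos[OF k(1)] by (intro mult_strict_left_mono) auto
    then show ?thesis using ec[of k n] ec[of k "n-1"] k by simp
  qed
  have ratio: "ratio t (k+1) = tau t (k+1) / tau t k" for k unfolding ratio_def by simp
  have P2: "eta t \<alpha> n (k + 1) > ratio t (k + 1) * eta t \<alpha> n k" if k: "1 \<le> k" "k \<le> n - 1" for k
  proof -
    define c where "c = t n - t (k+1)"
    define a where "a = t n - t k"
    define b where "b = t n - t (k-1)"
    have c0: "0 \<le> c" unfolding c_def using le[of "k+1" n] k by simp
    have ca: "c < a" unfolding c_def a_def using lt[of k "k+1"] by simp
    have ab: "a < b" unfolding a_def b_def using lt[of "k-1" k] k by simp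
    have u: "tau t (k+1) = a - c" unfolding tau_def a_def c_def by simp
    have v: "tau t k = b - a" unfolding tau_def a_def b_def by simp
    have e1: "eta t \<alpha> n (k+1) = 2 / (\<Gamma> * (a-c)^2) * KK \<alpha> c a"
      using ec[of "k+1" n] k u unfolding a_def c_def by simp
    have e2: "eta t \<alpha> n k = 2 / (\<Gamma> * (b-a)^2) * KK \<alpha> a b"
      using ec[of k n] k v unfolding a_def b_def by simp
    have q1: "psi0 \<alpha> a / 12 < KK \<alpha> c a / (a-c)^3"
      using lt_div3[OF _ L5[OF assms(1,2) c0 ca]] ca by simp
    have q2: "KK \<alpha> a b / (b-a)^3 < psi0 \<alpha> a / 12"
      using div3_lt[OF _ L4[OF assms(1,2) _ ab]] ab c0 ca by simp
    have "0 < 2*(a-c)/\<Gamma> * (KK \<alpha> c a/(a-c)^3 - KK \<alpha> a b/(b-a)^3)"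
    proof (rule mult_pos_pos)
      show "0 < 2*(a-c)/\<Gamma>" using G ca by simp
      show "0 < KK \<alpha> c a/(a-c)^3 - KK \<alpha> a b/(b-a)^3" using q1 q2 by linarith
    qed
    also have "\<dots> = eta t \<alpha> n (k+1) - ratio t (k+1) * eta t \<alpha> n k"
      unfolding e1 e2 ratio u v using alg_form[OF G, of "a-c" "b-a"] ca ab by simp
    finally show ?thesis by simp
  qed
  have P3: "eta t \<alpha> n (k + 1) - ratio t (k + 1) * eta t \<alpha> n k
           < eta t \<alpha> (n - 1) (k + 1) - ratio t (k + 1) * eta t \<alpha> (n - 1) k"
    if k: "1 \<le> k" "k \<le> n - 2" for k
  proof -
    define c where "c = t (n-1) - t (k+1)"
    define a where "a = t (n-1) - t k"
    define b where "b = t (n-1) - t (k-1)"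
    define \<delta> where "\<delta> = t n - t (n-1)"
    have c0: "0 \<le> c" unfolding c_def using le[of "k+1" "n-1"] k by simp
    have ca: "c < a" unfolding c_def a_def using lt[of k "k+1"] by simp
    have ab: "a < b" unfolding a_def b_def using lt[of "k-1" k] k by simp
    have dpos: "\<delta> > 0" using d unfolding \<delta>_def .
    have u: "tau t (k+1) = a - c" unfolding tau_def a_def c_def by simp
    have v: "tau t k = b - a" unfolding tau_def a_def b_def by simp
    have e1: "eta t \<alpha> n (k+1) = 2 / (\<Gamma> * (a-c)^2) * KK \<alpha> (c+\<delta>) (a+\<delta>)"
      using ec[of "k+1" n] k u assms(5) unfolding a_def c_def \<delta>_def by simp
    have e2: "eta t \<alpha> n k = 2 / (\<Gamma> * (b-a)^2) * KK \<alpha> (a+\<delta>) (b+\<delta>)"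
      using ec[of k n] k v assms(5) unfolding a_def b_def \<delta>_def by simp
    have e3: "eta t \<alpha> (n-1) (k+1) = 2 / (\<Gamma> * (a-c)^2) * KK \<alpha> c a"
      using ec[of "k+1" "n-1"] k u unfolding a_def c_def by simp
    have e4: "eta t \<alpha> (n-1) k = 2 / (\<Gamma> * (b-a)^2) * KK \<alpha> a b"
      using ec[of k "n-1"] k v unfolding a_def b_def by simp
    have "2*(a-c)/\<Gamma> * (KK \<alpha> (c+\<delta>) (a+\<delta>)/(a-c)^3 - KK \<alpha> (a+\<delta>) (b+\<delta>)/(b-a)^3)
        < 2*(a-c)/\<Gamma> * (KK \<alpha> c a/(a-c)^3 - KK \<alpha> a b/(b-a)^3)"
      using L8[OF assms(1,2) c0 ca ab dpos] G ca by (intro mult_strict_left_mono) auto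
    then show ?thesis
      unfolding e1 e2 e3 e4 ratio u v using alg_form[OF G, of "a-c" "b-a"] ca ab by simp
  qed
  show ?thesis using P1 P2 P3 by blast
qed

end
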